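(* Let $d\ge3$ be odd and $m$ an integer with $d+1<m$. Then for all $1\le i\le m-d$, \[ \eta(d,m+1,i)=\eta(d,m,i)+\eta(d,m,i-1)+\eta(d-2,m-1,i), \] where, by convention, $\eta(d,m,0)=\eta(d,m,m-d)=0$ (so for $i=1$ the identity reads $\eta(d,m+1,1)=\eta(d,m,1)+\eta(d-2,m-1,1)$ and for $i=m-d$ it reads $\eta(d,m+1,m-d)=\eta(d-2,m-1,m-d)+\eta(d,m,m-d-1)$).
   Context: For an odd integer $e\ge1$, an integer $n$ with $e+1<n$, and $1\le i\le n-e-1$, set \[ \eta(e,n,i)=\binom{n-[e/2]-2}{[e/2]+i}\binom{[e/2]+i-1}{[e/2]}, \] and $\eta(e,n,0)=\eta(e,n,n-e)=0$, where $[r]$ denotes the largest integer $\le r$. *)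

theory Defs
  imports Main
begin

text \<open>eta e n i for odd e >= 1, e + 1 < n, 0 <= i <= n - e.
  Values outside the range 0 <= i <= n - e are never used.\<close>
definition eta :: "nat \<Rightarrow> nat \<Rightarrow> nat \<Rightarrow> nat" where
  "eta e n i = (if i = 0 \<or> i = n - e then 0
     else ((n - e div 2 - 2) choose (e div 2 + i)) * ((e div 2 + i - 1) choose (e div 2)))"

end

theory Submission
  imports Defs
begin

theorem proposition6p2:
  fixes d m i :: nat
  assumes "odd d" and "d \<ge> 3" and "d + 1 < m"
    and "1 \<le> i" and "i \<le> m - d"
  shows "eta d (m + 1) i = eta d m i + eta d m (i - 1) + eta (d - 2) (m - 1) i"
proof -
  obtain k where dk: "d = 2*k+1" using assms(1) oddE by blast
  obtain k' where kk: "k = Suc k'" using assms(2) dk by (cases k) auto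
  obtain i' where ii: "i = Suc i'" using assms(4) by (cases i) auto
  have "m = (m - k - 2) + k + 2" using assms(3) dk by simp
  then obtain N where mN: "m = N + k + 2" by blast
  have dd: "d div 2 = k" "(d-2) div 2 = k'" using dk kk by auto
  have ne1: "i \<noteq> m + 1 - d" "i \<noteq> m - 1 - (d - 2)" "i - 1 \<noteq> m - d" using assms by auto
  have e1: "eta d (m+1) i = (Suc N choose Suc (k+i')) * (Suc (k'+i') choose Suc k')"
    using ne1 dd unfolding eta_def by (simp add: dk kk ii mN)
  have e2: "eta d m i = (N choose Suc (k+i')) * (Suc (k'+i') choose Suc k')"
  proof (cases "i = m - d")
    case True
    then have "N < Suc (k+i')" using dk mN ii by simp
    then show ?thesis using True unfolding eta_def by simp
  next
    case False
    then show ?thesis using dd unfolding eta_def by (simp add: kk ii mN)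
  qed
  have e3: "eta d m (i-1) = (N choose (k+i')) * ((k'+i') choose Suc k')"
  proof (cases "i' = 0")
    case True
    then show ?thesis unfolding eta_def using ii kk by simp
  next
    case False
    then show ?thesis using ne1 dd unfolding eta_def by (simp add: dk kk ii mN)
  qed
  have e4: "eta (d-2) (m-1) i = (N choose (k+i')) * ((k'+i') choose k')"
    using ne1 dd unfolding eta_def by (simp add: dk kk ii mN)
  show ?thesis unfolding e1 e2 e3 e4
    by (simp add: algebra_simps kk)
qed

end
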